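(* Let $S$ be a range set and $\Gamma$ the middle-third Cantor set. The set of all uniformly perfect metrics in $\mathrm{Ult}(\Gamma,S)$ is an $F_\sigma$ subset of $(\mathrm{Ult}(\Gamma,S),\mathcal{UD}_\Gamma^S)$.
   Context: A range set is $S\subseteq[0,\infty)$ with $0\in S$. $\mathrm{Ult}(X,S)$ is the set of all ultrametrics on $X$ with values in $S$ generating the topology of $X$. $\mathcal{UD}_X^S(d,e)$ is the infimum of all $\epsilon\in S\cup\{\infty\}$ such that for all $x,y$, $d(x,y)\le\max\{e(x,y),\epsilon\}$ and $e(x,y)\le\max\{d(x,y),\epsilon\}$. A metric space $(X,d)$ is uniformly perfect if there is $c\in(0,1)$ such that for every $x\in X$ and every $r\in(0,\delta_d(X))$ ($\delta_d$ = diameter) there is $y$ with $cr\le d(x,y)\le r$. $F_\sigma$: countable union of closed sets. *)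

theory Defs
  imports "HOL-Analysis.Analysis"
begin

definition range_set :: "real set \<Rightarrow> bool" where
  "range_set S \<longleftrightarrow> S \<subseteq> {0..} \<and> 0 \<in> S"

fun cantor_stage :: "nat \<Rightarrow> real set" where
  "cantor_stage 0 = {0..1}"
| "cantor_stage (Suc n) = (\<lambda>x. x / 3) ` cantor_stage n \<union> (\<lambda>x. 2/3 + x / 3) ` cantor_stage n"

definition cantor_set :: "real set" where
  "cantor_set = (\<Inter>n. cantor_stage n)"

text \<open>A metric is a function on the carrier; to identify it uniquely we
  require it to vanish outside carrier x carrier (extensionality convention).\<close>
definition Ult :: "'a topology \<Rightarrow> real set \<Rightarrow> ('a \<Rightarrow> 'a \<Rightarrow> real) set" where
  "Ult X S = {d. Metric_space (topspace X) d
      \<and> (\<forall>x\<in>topspace X. \<forall>y\<in>topspace X. \<forall>z\<in>topspace X. d x z \<le> max (d x y) (d y z))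
      \<and> (\<forall>x\<in>topspace X. \<forall>y\<in>topspace X. d x y \<in> S)
      \<and> Metric_space.mtopology (topspace X) d = X
      \<and> (\<forall>x y. (x \<notin> topspace X \<or> y \<notin> topspace X) \<longrightarrow> d x y = 0)}"

definition UD :: "'a set \<Rightarrow> real set \<Rightarrow> ('a \<Rightarrow> 'a \<Rightarrow> real) \<Rightarrow> ('a \<Rightarrow> 'a \<Rightarrow> real) \<Rightarrow> ereal" where
  "UD X S d e = Inf {\<epsilon>. (\<epsilon> = \<infinity> \<or> (\<exists>r\<in>S. \<epsilon> = ereal r))
      \<and> (\<forall>x\<in>X. \<forall>y\<in>X. ereal (d x y) \<le> max (ereal (e x y)) \<epsilon>
                      \<and> ereal (e x y) \<le> max (ereal (d x y)) \<epsilon>)}"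

definition UD_topology :: "'a topology \<Rightarrow> real set \<Rightarrow> ('a \<Rightarrow> 'a \<Rightarrow> real) topology" where
  "UD_topology X S = topology (\<lambda>U. U \<subseteq> Ult X S \<and>
      (\<forall>d\<in>U. \<exists>r>0. {e \<in> Ult X S. UD (topspace X) S d e < ereal r} \<subseteq> U))"

definition diam_of :: "'a set \<Rightarrow> ('a \<Rightarrow> 'a \<Rightarrow> real) \<Rightarrow> ereal" where
  "diam_of X d = (SUP p\<in>X \<times> X. ereal (d (fst p) (snd p)))"

definition uniformly_perfect :: "'a set \<Rightarrow> ('a \<Rightarrow> 'a \<Rightarrow> real) \<Rightarrow> bool" where
  "uniformly_perfect X d \<longleftrightarrow> (\<exists>c. 0 < c \<and> c < 1 \<and>
      (\<forall>x\<in>X. \<forall>r. 0 < r \<and> ereal r < diam_of X d \<longrightarrow>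
         (\<exists>y\<in>X. c * r \<le> d x y \<and> d x y \<le> r)))"

end

theory Submission
  imports Defs
begin

definition UDP :: "'a topology \<Rightarrow> real set \<Rightarrow> ('a \<Rightarrow> 'a \<Rightarrow> real) set \<Rightarrow> bool" where
  "UDP X S = (\<lambda>U. U \<subseteq> Ult X S \<and>
      (\<forall>d\<in>U. \<exists>r>0. {e \<in> Ult X S. UD (topspace X) S d e < ereal r} \<subseteq> U))"

lemma UDP_istop: "istopology (UDP X S)"
  unfolding istopology_def
proof (intro conjI allI impI)
  fix U V assume U: "UDP X S U" and V: "UDP X S V"
  show "UDP X S (U \<inter> V)"
    unfolding UDP_def
  proof (intro conjI ballI)
    show "U \<inter> V \<subseteq> Ult X S" using U unfolding UDP_def by blast
    fix d assume d: "d \<in> U \<inter> V"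
    obtain r1 where r1: "r1 > 0" "{e \<in> Ult X S. UD (topspace X) S d e < ereal r1} \<subseteq> U"
      using U d unfolding UDP_def by blast
    obtain r2 where r2: "r2 > 0" "{e \<in> Ult X S. UD (topspace X) S d e < ereal r2} \<subseteq> V"
      using V d unfolding UDP_def by blast
    show "\<exists>r>0. {e \<in> Ult X S. UD (topspace X) S d e < ereal r} \<subseteq> U \<inter> V"
    proof (intro exI[of _ "min r1 r2"] conjI subsetI)
      show "0 < min r1 r2" using r1 r2 by simp
      fix e assume e: "e \<in> {e \<in> Ult X S. UD (topspace X) S d e < ereal (min r1 r2)}"
      then have lt: "UD (topspace X) S d e < ereal (min r1 r2)" by blast
      have "ereal (min r1 r2) \<le> ereal r1" "ereal (min r1 r2) \<le> ereal r2" by simp_all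
      then have "UD (topspace X) S d e < ereal r1" "UD (topspace X) S d e < ereal r2"
        using lt by (blast intro: less_le_trans)+
      then show "e \<in> U \<inter> V" using e r1(2) r2(2) by blast
    qed
  qed
next
  fix K assume K: "\<forall>U\<in>K. UDP X S U"
  show "UDP X S (\<Union>K)"
    unfolding UDP_def
  proof (intro conjI ballI)
    show "\<Union>K \<subseteq> Ult X S" using K unfolding UDP_def by blast
    fix d assume "d \<in> \<Union>K"
    then obtain U where "U \<in> K" "d \<in> U" by blast
    then obtain r where "r > 0" "{e \<in> Ult X S. UD (topspace X) S d e < ereal r} \<subseteq> U"
      using K unfolding UDP_def by blast
    then show "\<exists>r>0. {e \<in> Ult X S. UD (topspace X) S d e < ereal r} \<subseteq> \<Union>K"
      using \<open>U \<in> K\<close> by blast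
  qed
qed

lemma openin_UD: "openin (UD_topology X S) = UDP X S"
proof -
  have "UD_topology X S = topology (UDP X S)" unfolding UD_topology_def UDP_def by simp
  then show ?thesis by (simp add: topology_inverse'[OF UDP_istop])
qed

lemma topspace_UD: "topspace (UD_topology X S) = Ult X S"
proof -
  have "UDP X S (Ult X S)" unfolding UDP_def by (intro conjI ballI exI[of _ "1::real"]) auto
  moreover have "\<And>U. UDP X S U \<Longrightarrow> U \<subseteq> Ult X S" unfolding UDP_def by blast
  ultimately have "\<Union>{U. UDP X S U} = Ult X S" by (intro equalityI Union_least Union_upper) auto
  then show ?thesis unfolding topspace_def openin_UD by simp
qed

lemma UD_lt:
  assumes "UD T S d e < ereal r"
  shows "\<exists>\<epsilon>. \<epsilon> < r \<and> (\<forall>x\<in>T. \<forall>y\<in>T. d x y \<le> max (e x y) \<epsilon> \<and> e x y \<le> max (d x y) \<epsilon>)"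
proof -
  from assms obtain z where z: "z = \<infinity> \<or> (\<exists>r\<in>S. z = ereal r)"
    "\<forall>x\<in>T. \<forall>y\<in>T. ereal (d x y) \<le> max (ereal (e x y)) z \<and> ereal (e x y) \<le> max (ereal (d x y)) z"
    "z < ereal r"
    unfolding UD_def by (auto simp: Inf_less_iff)
  then obtain \<epsilon> where "z = ereal \<epsilon>" by auto
  have mx: "\<And>a b. max (ereal a) (ereal b) = ereal (max a b)" by (simp add: max_def)
  show ?thesis
  proof (intro exI[of _ \<epsilon>] conjI ballI)
    show "\<epsilon> < r" using z(3) \<open>z = ereal \<epsilon>\<close> by simp
    fix x y assume "x \<in> T" "y \<in> T"
    then have "ereal (d x y) \<le> ereal (max (e x y) \<epsilon>)" "ereal (e x y) \<le> ereal (max (d x y) \<epsilon>)"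
      using z(2)[unfolded \<open>z = ereal \<epsilon>\<close> mx] by auto
    then show "d x y \<le> max (e x y) \<epsilon>" "e x y \<le> max (d x y) \<epsilon>" by (simp_all only: ereal_less_eq)
  qed
qed

definition FF :: "'a topology \<Rightarrow> real set \<Rightarrow> real \<Rightarrow> ('a \<Rightarrow> 'a \<Rightarrow> real) set" where
  "FF X S c = {d \<in> Ult X S. \<forall>x\<in>topspace X. \<forall>r. 0 < r \<and> ereal r < diam_of (topspace X) d \<longrightarrow>
         (\<exists>y\<in>topspace X. c * r \<le> d x y \<and> d x y \<le> r)}"

lemma FF_closed:
  assumes c: "0 < c"
  shows "closedin (UD_topology X S) (FF X S c)"
  unfolding closedin_def topspace_UD openin_UD
proof (intro conjI)
  show "FF X S c \<subseteq> Ult X S" unfolding FF_def by blast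
  show "UDP X S (Ult X S - FF X S c)"
    unfolding UDP_def
  proof (intro conjI ballI)
    show "Ult X S - FF X S c \<subseteq> Ult X S" by blast
    fix d assume d: "d \<in> Ult X S - FF X S c"
    then obtain x r where xr: "x \<in> topspace X" "0 < r" "ereal r < diam_of (topspace X) d"
      "\<not> (\<exists>y\<in>topspace X. c * r \<le> d x y \<and> d x y \<le> r)"
      unfolding FF_def by blast
    obtain p q where pq: "p \<in> topspace X" "q \<in> topspace X" "r < d p q"
      using xr(3) unfolding diam_of_def by (auto simp: less_SUP_iff)
    show "\<exists>r>0. {e \<in> Ult X S. UD (topspace X) S d e < ereal r} \<subseteq> Ult X S - FF X S c"
    proof (intro exI[of _ "min (c*r) r"] conjI subsetI)
      show "0 < min (c * r) r" using c xr by simp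
      fix e assume e: "e \<in> {e \<in> Ult X S. UD (topspace X) S d e < ereal (min (c * r) r)}"
      then obtain \<epsilon> where eps: "\<epsilon> < min (c * r) r"
        "\<forall>x\<in>topspace X. \<forall>y\<in>topspace X. d x y \<le> max (e x y) \<epsilon> \<and> e x y \<le> max (d x y) \<epsilon>"
        using UD_lt by blast
      have epr: "\<epsilon> < r" "\<epsilon> < c * r" using eps(1) by auto
      have dpq: "d p q \<le> max (e p q) \<epsilon>" using eps(2) pq by blast
      have "d p q \<le> e p q" using dpq pq(3) epr(1) by (auto simp: max_def split: if_splits)
      then have "r < e p q" using pq(3) by linarith
      then have "\<exists>x\<in>topspace X. \<exists>y\<in>topspace X. r < e x y" using pq(1,2) by blast
      then have "ereal r < diam_of (topspace X) e"
        unfolding diam_of_def by (auto simp: less_SUP_iff)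
      show "e \<in> Ult X S - FF X S c"
      proof
        show "e \<in> Ult X S" using e by blast
        show "e \<notin> FF X S c"
        proof
          assume "e \<in> FF X S c"
          then obtain y where y: "y \<in> topspace X" "c * r \<le> e x y" "e x y \<le> r"
            using xr(1,2) \<open>ereal r < diam_of (topspace X) e\<close> unfolding FF_def by blast
          have "d x y \<le> max (e x y) \<epsilon>" "e x y \<le> max (d x y) \<epsilon>" using eps(2) xr(1) y(1) by auto
          then have "d x y = e x y" using epr(2) y(2) by (auto simp: max_def split: if_splits)
          then show False using xr(4) y by auto
        qed
      qed
    qed
  qed
qed

theorem lemma4p2:
  fixes S :: "real set"
  assumes "range_set S"
  shows "fsigma_in (UD_topology (top_of_set cantor_set) S)
           {d \<in> Ult (top_of_set cantor_set) S. uniformly_perfect cantor_set d}"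
proof -
  let ?X = "top_of_set cantor_set"
  have eq: "{d \<in> Ult ?X S. uniformly_perfect cantor_set d} = (\<Union>n. FF ?X S (1 / (real n + 2)))"
  proof (intro equalityI subsetI)
    fix d assume "d \<in> {d \<in> Ult ?X S. uniformly_perfect cantor_set d}"
    then obtain c where d: "d \<in> Ult ?X S" "0 < c"
      "\<forall>x\<in>cantor_set. \<forall>r. 0 < r \<and> ereal r < diam_of cantor_set d \<longrightarrow>
         (\<exists>y\<in>cantor_set. c * r \<le> d x y \<and> d x y \<le> r)"
      unfolding uniformly_perfect_def by blast
    obtain n where n: "inverse (real (Suc n)) < c" using reals_Archimedean d(2) by blast
    have le: "1 / (real n + 2) \<le> c"
    proof -
      have "1 / (real n + 2) \<le> 1 / (real n + 1)" by (rule divide_left_mono) auto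
      moreover have "inverse (real (Suc n)) = 1 / (real n + 1)" by (simp add: inverse_eq_divide)
      ultimately show ?thesis using n by linarith
    qed
    have H: "\<forall>x\<in>cantor_set. \<forall>r. 0 < r \<and> ereal r < diam_of cantor_set d \<longrightarrow>
         (\<exists>y\<in>cantor_set. 1 / (real n + 2) * r \<le> d x y \<and> d x y \<le> r)"
    proof (intro ballI allI impI)
      fix x r assume x: "x \<in> cantor_set" and r: "0 < r \<and> ereal r < diam_of cantor_set d"
      then obtain y where y: "y\<in>cantor_set" "c * r \<le> d x y" "d x y \<le> r" using d(3) by blast
      have "1 / (real n + 2) * r \<le> c * r"
        using le r by (intro mult_right_mono) auto
      then show "\<exists>y\<in>cantor_set. 1 / (real n + 2) * r \<le> d x y \<and> d x y \<le> r"
        using y by (intro bexI[of _ y]) auto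
    qed
    have "d \<in> FF ?X S (1 / (real n + 2))"
      unfolding FF_def topspace_euclidean_subtopology using d(1) H by blast
    then show "d \<in> (\<Union>n. FF ?X S (1 / (real n + 2)))" by blast
  next
    fix d assume "d \<in> (\<Union>n. FF ?X S (1 / (real n + 2)))"
    then obtain n where d: "d \<in> FF ?X S (1 / (real n + 2))" by blast
    have pos: "0 < 1 / (real n + 2)" "1 / (real n + 2) < (1::real)" by auto
    have d1: "d \<in> Ult ?X S" using d unfolding FF_def by blast
    have H: "\<forall>x\<in>cantor_set. \<forall>r. 0 < r \<and> ereal r < diam_of cantor_set d \<longrightarrow>
         (\<exists>y\<in>cantor_set. 1 / (real n + 2) * r \<le> d x y \<and> d x y \<le> r)"
      using d unfolding FF_def topspace_euclidean_subtopology by blast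
    have "uniformly_perfect cantor_set d"
      unfolding uniformly_perfect_def using pos H by blast
    then show "d \<in> {d \<in> Ult ?X S. uniformly_perfect cantor_set d}" using d1 by blast
  qed
  have cl: "\<And>n. closedin (UD_topology ?X S) (FF ?X S (1 / (real n + 2)))"
    by (rule FF_closed) simp
  show ?thesis
    unfolding eq
    by (rule fsigma_in_Union) (use cl in \<open>auto intro: closed_imp_fsigma_in\<close>)
qed

end
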